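(* Let $q=2^n$ with $n\ge 2$. Then at most $\phi(\phi(q))+2$ of the numbers in the set $\{H_{a/q}: 1\le a\le q\}$ are linearly independent over $\overline{\mathbb{Q}}$; that is, the $\overline{\mathbb{Q}}$-linear span of this set has dimension at most $\phi(\phi(q))+2$.
   Context: $\phi$ is Euler's totient function and $\overline{\mathbb{Q}}$ is the field of algebraic numbers. For a complex number $r$ which is not a negative integer, $H_r=r\sum_{k=1}^{\infty}\frac{1}{k(r+k)}$; for $1\le a\le q$ it satisfies Gauss's formula $H_{a/q}=\frac qa-\log(2q)-\frac{\pi}{2}\cot(\pi a/q)+2\sum_{n=1}^{\lfloor (q-1)/2\rfloor}\cos(2\pi n a/q)\log\sin(\pi n/q)$. *)

theory Defs
  imports "HOL-Analysis.Analysis" "HOL-Computational_Algebra.Polynomial" "HOL-Number_Theory.Number_Theory"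
begin

definition harmH :: "complex \<Rightarrow> complex" where
  "harmH r = r * (\<Sum>k. 1 / (of_nat (Suc k) * (r + of_nat (Suc k))))"

definition alg_independent :: "complex set \<Rightarrow> bool" where
  "alg_independent S \<longleftrightarrow> finite S \<and>
     (\<forall>c :: complex \<Rightarrow> complex. (\<forall>x\<in>S. algebraic (c x)) \<longrightarrow>
        (\<Sum>x\<in>S. c x * x) = 0 \<longrightarrow> (\<forall>x\<in>S. c x = 0))"

end

theory Submission
  imports Defs
begin

lemma harmH_Digamma:
  assumes "Re r \<ge> 0"
  shows "harmH r = Digamma (r + 1) + euler_mascheroni"
proof -
  have r1: "r + 1 \<noteq> 0" using assms by (auto simp: complex_eq_iff)
  have sm: "summable (\<lambda>k. inverse (of_nat (Suc k)) - inverse (r + 1 + of_nat k) :: complex)"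
    using summable_Digamma[OF r1] .
  have eq: "inverse (of_nat (Suc k)) - inverse (r + 1 + of_nat k) = r * (1 / (of_nat (Suc k) * (r + of_nat (Suc k))))" for k
  proof -
    have nz: "r + of_nat (Suc k) \<noteq> 0" using assms by (auto simp: complex_eq_iff)
    have nz2: "r + 1 + of_nat k = r + of_nat (Suc k)" by simp
    show ?thesis using nz unfolding nz2 by (simp add: field_simps del: of_nat_Suc)
  qed
  show ?thesis
  proof (cases "r = 0")
    case True thus ?thesis by (simp add: harmH_def)
  next
    case False
    have sm2: "summable (\<lambda>k. r * (1 / (of_nat (Suc k) * (r + of_nat (Suc k)))))"
      using sm unfolding eq .
    hence sm3: "summable (\<lambda>k. (1 / (of_nat (Suc k) * (r + of_nat (Suc k)))))"
      using False summable_cmult_iff by blast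
    have "Digamma (r + 1) + euler_mascheroni = (\<Sum>k. r * (1 / (of_nat (Suc k) * (r + of_nat (Suc k)))))"
      unfolding Digamma_def eq by simp
    also have "\<dots> = harmH r" unfolding harmH_def by (rule suminf_mult[OF sm3])
    finally show ?thesis by simp
  qed
qed

lemma Digamma_reflection:
  fixes z :: complex
  assumes "z \<notin> \<int>"
  shows "Digamma (1 - z) - Digamma z = of_real pi * cot (of_real pi * z)"
proof -
  define g where "g t = Gamma t * Gamma (1 - t) * sin (of_real pi * t)" for t :: complex
  have z1: "1 - z \<notin> \<int>" using assms Ints_diff[of 1 "1 - z"] by auto
  have zn: "z \<notin> \<int>\<^sub>\<le>\<^sub>0" "1 - z \<notin> \<int>\<^sub>\<le>\<^sub>0" using assms z1 nonpos_Ints_subset_Ints by auto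
  have sinnz: "sin (of_real pi * t) \<noteq> 0" if "t \<notin> \<int>" for t :: complex
    using that by (subst sin_eq_0) auto
  have "eventually (\<lambda>t. t \<in> UNIV - \<int>) (nhds z)"
    using assms by (intro eventually_nhds_in_open) (auto simp: open_Diff)
  hence ev: "eventually (\<lambda>t. g t = of_real pi) (nhds z)"
  proof eventually_elim
    case (elim t)
    thus ?case using Gamma_reflection_complex[of t] sinnz[of t] by (simp add: g_def)
  qed
  have d0: "(g has_field_derivative 0) (at z)"
    by (subst DERIV_cong_ev[OF refl ev refl]) (rule DERIV_const)
  have d1: "(g has_field_derivative (Gamma z * Digamma z * Gamma (1 - z) * sin (of_real pi * z)
            + Gamma z * (Gamma (1 - z) * Digamma (1 - z) * (-1)) * sin (of_real pi * z)
            + Gamma z * Gamma (1 - z) * (cos (of_real pi * z) * of_real pi))) (at z)"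
    unfolding g_def
    apply (rule derivative_eq_intros refl zn | simp add: zn)+
    apply (simp add: algebra_simps)
    done
  have "Gamma z * Digamma z * Gamma (1 - z) * sin (of_real pi * z)
            + Gamma z * (Gamma (1 - z) * Digamma (1 - z) * (-1)) * sin (of_real pi * z)
            + Gamma z * Gamma (1 - z) * (cos (of_real pi * z) * of_real pi) = 0"
    using DERIV_unique[OF d1 d0] .
  hence "Gamma z * Gamma (1 - z) * ((Digamma z - Digamma (1 - z)) * sin (of_real pi * z) + cos (of_real pi * z) * of_real pi) = 0"
    by (simp add: algebra_simps)
  moreover have "Gamma z \<noteq> 0" "Gamma (1 - z) \<noteq> 0" using zn by (auto simp: Gamma_nonzero)
  ultimately have *: "(Digamma z - Digamma (1 - z)) * sin (of_real pi * z) + cos (of_real pi * z) * of_real pi = 0"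
    by simp
  have s: "sin (of_real pi * z) \<noteq> 0" using sinnz[OF assms] .
  have "Digamma (1 - z) - Digamma z = cos (of_real pi * z) * of_real pi / sin (of_real pi * z)"
    using * s by (simp add: eq_divide_eq algebra_simps)
  thus ?thesis unfolding cot_def by simp
qed

lemma Digamma_duplication:
  fixes z :: complex
  assumes "Re z > 0"
  shows "Digamma z + Digamma (z + 1/2) = 2 * Digamma (2 * z) - 2 * of_real (ln 2)"
proof -
  have nn: "t \<notin> \<int>\<^sub>\<le>\<^sub>0" if "Re t > 0" for t :: complex
    using that by (auto elim!: nonpos_Ints_cases')
  define f where "f t = Gamma t * Gamma (t + 1/2) - exp ((1 - 2*t) * of_real (ln 2)) * of_real (sqrt pi) * Gamma (2*t)" for t :: complex
  have "eventually (\<lambda>t. t \<in> {t. 0 < Re t}) (nhds z)"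
    using assms by (intro eventually_nhds_in_open) (auto simp: open_halfspace_Re_gt)
  hence ev: "eventually (\<lambda>t. f t = 0) (nhds z)"
  proof eventually_elim
    case (elim t)
    hence "t \<notin> \<int>\<^sub>\<le>\<^sub>0" "t + 1/2 \<notin> \<int>\<^sub>\<le>\<^sub>0" using nn by auto
    thus ?case using Gamma_legendre_duplication[of t] by (simp add: f_def)
  qed
  have d0: "(f has_field_derivative 0) (at z)"
    by (subst DERIV_cong_ev[OF refl ev refl]) (rule DERIV_const)
  have zn: "z \<notin> \<int>\<^sub>\<le>\<^sub>0" "z + 1/2 \<notin> \<int>\<^sub>\<le>\<^sub>0" "2 * z \<notin> \<int>\<^sub>\<le>\<^sub>0" using nn assms by auto
  define E where "E = exp ((1 - 2*z) * of_real (ln 2))"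
  have d1: "(f has_field_derivative (Gamma z * Digamma z * Gamma (z + 1/2) + Gamma z * (Gamma (z + 1/2) * Digamma (z + 1/2))
      - (E * (-2 * of_real (ln 2)) * of_real (sqrt pi) * Gamma (2*z) + E * of_real (sqrt pi) * (Gamma (2*z) * Digamma (2*z) * 2)))) (at z)"
    unfolding f_def E_def using zn
    by (auto intro!: derivative_eq_intros)
  have G: "Gamma z * Gamma (z + 1/2) = E * of_real (sqrt pi) * Gamma (2*z)"
    using Gamma_legendre_duplication[OF zn(1,2)] by (simp add: E_def)
  have Gnz: "Gamma z * Gamma (z + 1/2) \<noteq> 0" using zn by (auto simp: Gamma_nonzero)
  have "Gamma z * Digamma z * Gamma (z + 1/2) + Gamma z * (Gamma (z + 1/2) * Digamma (z + 1/2))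
      - (E * (-2 * of_real (ln 2)) * of_real (sqrt pi) * Gamma (2*z) + E * of_real (sqrt pi) * (Gamma (2*z) * Digamma (2*z) * 2)) = 0"
    using DERIV_unique[OF d1 d0] .
  hence "(Gamma z * Gamma (z + 1/2)) * (Digamma z + Digamma (z + 1/2)) = (E * of_real (sqrt pi) * Gamma (2*z)) * (2 * Digamma (2 * z) - 2 * of_real (ln 2))"
    by (simp add: algebra_simps)
  hence "(Gamma z * Gamma (z + 1/2)) * (Digamma z + Digamma (z + 1/2)) = (Gamma z * Gamma (z + 1/2)) * (2 * Digamma (2 * z) - 2 * of_real (ln 2))"
    by (simp only: G)
  thus ?thesis using Gnz by simp
qed

definition qscale :: "rat \<Rightarrow> complex \<Rightarrow> complex" where "qscale r z = of_rat r * z"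

interpretation Q: vector_space qscale
  by unfold_locales (auto simp: qscale_def algebra_simps of_rat_add of_rat_mult)

definition mulset :: "complex set \<Rightarrow> complex set \<Rightarrow> complex set" where
  "mulset A B = {a * b | a b. a \<in> A \<and> b \<in> B}"

lemma Q_subspace_iff: "Q.subspace S \<longleftrightarrow> 0 \<in> S \<and> (\<forall>x\<in>S. \<forall>y\<in>S. x + y \<in> S) \<and> (\<forall>r. \<forall>x\<in>S. of_rat r * x \<in> S)"
  by (auto simp: Q.subspace_def qscale_def)

lemma span_mult_E:
  assumes mulE: "\<And>a b. a \<in> E \<Longrightarrow> b \<in> E \<Longrightarrow> a * b \<in> E"
    and a: "a \<in> Q.span E" and x: "x \<in> Q.span (mulset E X)"
  shows "a * x \<in> Q.span (mulset E X)"
proof -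
  have step1: "e * y \<in> Q.span (mulset E X)" if e: "e \<in> E" and y: "y \<in> Q.span (mulset E X)" for e y
    using y
  proof (induction rule: Q.span_induct)
    case (step y)
    then obtain e' x' where "y = e' * x'" "e' \<in> E" "x' \<in> X" by (auto simp: mulset_def)
    hence "e * y = (e * e') * x'" by (simp add: mult.assoc)
    moreover have "(e * e') * x' \<in> mulset E X" using mulE[OF e \<open>e' \<in> E\<close>] \<open>x' \<in> X\<close> by (auto simp: mulset_def)
    ultimately show ?case by (metis Q.span_base)
  next
    case base
    show ?case unfolding Q_subspace_iff
      by (auto simp: Q.span_zero distrib_left intro: Q.span_add)
         (metis Q.span_scale mult.left_commute qscale_def)
  qed
  show ?thesis using a
  proof (induction rule: Q.span_induct)
    case (step e)
    thus ?case using step1 x by blast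
  next
    case base
    show ?case unfolding Q_subspace_iff
      by (auto simp: Q.span_zero distrib_right intro: Q.span_add)
         (metis Q.span_scale mult.assoc qscale_def)
  qed
qed

lemma mulset_one: "mulset E {1} = E" by (auto simp: mulset_def)

lemma span_mult_closed:
  assumes mulE: "\<And>a b. a \<in> E \<Longrightarrow> b \<in> E \<Longrightarrow> a * b \<in> E"
    and "a \<in> Q.span E" "b \<in> Q.span E"
  shows "a * b \<in> Q.span E"
  using span_mult_E[OF mulE, of a b "{1}"] assms by (simp add: mulset_one)

lemma span_E_algebraic:
  assumes finE: "finite E" and oneE: "1 \<in> E" and mulE: "\<And>a b. a \<in> E \<Longrightarrow> b \<in> E \<Longrightarrow> a * b \<in> E"
    and a: "a \<in> Q.span E"
  shows "algebraic a"
proof -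
  define N where "N = card E"
  have pw: "a ^ k \<in> Q.span E" for k
    by (induction k) (auto intro: Q.span_base oneE span_mult_closed[OF mulE] a)
  show ?thesis
  proof (cases "inj_on (\<lambda>k. a ^ k) {..N}")
    case False
    then obtain i j where ij: "i \<le> N" "j \<le> N" "i \<noteq> j" "a ^ i = a ^ j"
      by (auto simp: inj_on_def)
    obtain i' j' where ij': "i' < j'" "a ^ i' = a ^ j'"
      using ij by (metis linorder_neqE_nat)
    define p :: "complex poly" where "p = Polynomial.monom 1 j' - Polynomial.monom 1 i'"
    have "Polynomial.coeff p j' = 1" using ij' by (simp add: p_def coeff_monom)
    hence "p \<noteq> 0" by auto
    moreover have "Polynomial.poly p a = 0" using ij' by (simp add: p_def poly_monom)
    moreover have "Polynomial.coeff p k \<in> \<rat>" for k by (simp add: p_def coeff_monom)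
    ultimately show ?thesis by (intro algebraicI'[of p]) auto
  next
    case True
    define P where "P = (\<lambda>k. a ^ k) ` {..N}"
    have finP: "finite P" unfolding P_def by simp
    have cardP: "card P = N + 1" unfolding P_def using True by (simp add: card_image)
    have PE: "P \<subseteq> Q.span E" using pw unfolding P_def by auto
    have "Q.dependent P"
    proof (rule ccontr)
      assume "\<not> Q.dependent P"
      from Q.independent_span_bound[OF finE this PE] have "card P \<le> card E" by blast
      thus False using cardP N_def by simp
    qed
    then obtain u where u: "\<exists>v\<in>P. u v \<noteq> 0" "(\<Sum>v\<in>P. qscale (u v) v) = 0"
      using Q.dependent_finite[OF finP] by blast
    define p :: "complex poly" where "p = (\<Sum>k\<le>N. Polynomial.monom (of_rat (u (a ^ k))) k)"
    have cp: "Polynomial.coeff p k = (if k \<le> N then of_rat (u (a ^ k)) else 0)" for k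
      by (simp add: p_def Polynomial.coeff_sum coeff_monom)
    have "Polynomial.poly p a = (\<Sum>k\<le>N. of_rat (u (a ^ k)) * a ^ k)"
      by (simp add: p_def Polynomial.poly_sum poly_monom)
    also have "\<dots> = (\<Sum>v\<in>P. qscale (u v) v)"
      unfolding P_def using True by (simp add: sum.reindex qscale_def)
    finally have "Polynomial.poly p a = 0" using u by simp
    moreover from u obtain k where "k \<le> N" "u (a ^ k) \<noteq> 0" unfolding P_def by auto
    hence "Polynomial.coeff p k \<noteq> 0" using cp by simp
    hence "p \<noteq> 0" by auto
    moreover have "Polynomial.coeff p k \<in> \<rat>" for k using cp by simp
    ultimately show ?thesis by (intro algebraicI'[of p]) auto
  qed
qed


lemma count_lemma:
  fixes E B S :: "complex set"
  assumes finE: "finite E" and oneE: "1 \<in> E" and mulE: "\<And>a b. a \<in> E \<Longrightarrow> b \<in> E \<Longrightarrow> a * b \<in> E"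
    and finB: "finite B"
    and indep: "alg_independent S"
    and sub: "S \<subseteq> Q.span (mulset E B)"
  shows "card S \<le> card B"
proof -
  obtain E' where E': "E' \<subseteq> E" "Q.independent E'" "E \<subseteq> Q.span E'"
    using Q.maximal_independent_subset[of E] by blast
  have finE': "finite E'" using E'(1) finE finite_subset by blast
  have alg: "algebraic a" if "a \<in> Q.span E" for a
    using span_E_algebraic[OF finE oneE mulE that] .
  have spanE: "Q.span E' = Q.span E"
  proof
    show "Q.span E' \<subseteq> Q.span E" using E'(1) by (rule Q.span_mono)
    show "Q.span E \<subseteq> Q.span E'" using E'(3) by (intro Q.span_minimal) auto
  qed
  have E'alg: "algebraic e" if "e \<in> E'" for e
    using alg that E'(1) Q.span_base by blast
  have z0E': "0 \<notin> E'" using E'(2) Q.dependent_zero by blast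
  have E'ne: "E' \<noteq> {}"
  proof
    assume "E' = {}"
    hence "Q.span E = {0}" using spanE by simp
    moreover have "1 \<in> Q.span E" using oneE by (rule Q.span_base)
    ultimately show False by simp
  qed
  have finS: "finite S" and indS: "\<And>c. (\<forall>x\<in>S. algebraic (c x)) \<Longrightarrow> (\<Sum>x\<in>S. c x * x) = 0 \<Longrightarrow> (\<forall>x\<in>S. c x = 0)"
    using indep unfolding alg_independent_def by blast+
  have z0S: "0 \<notin> S"
  proof
    assume "0 \<in> S"
    define c :: "complex \<Rightarrow> complex" where "c x = (if x = 0 then 1 else 0)" for x
    have "(\<Sum>x\<in>S. c x * x) = 0" by (intro sum.neutral) (auto simp: c_def)
    moreover have "\<forall>x\<in>S. algebraic (c x)" by (auto simp: c_def)
    ultimately have "c 0 = 0" using indS \<open>0 \<in> S\<close> by blast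
    thus False by (simp add: c_def)
  qed
  have mulB: "mulset E B \<subseteq> Q.span (mulset E' B)"
  proof
    fix y assume "y \<in> mulset E B"
    then obtain e b where y: "y = e * b" "e \<in> E" "b \<in> B" by (auto simp: mulset_def)
    have "e \<in> Q.span E'" using E'(3) y(2) by blast
    hence "e * b \<in> Q.span (mulset E' B)"
    proof (induction rule: Q.span_induct)
      case (step e')
      hence "e' * b \<in> mulset E' B" using y(3) by (auto simp: mulset_def)
      thus ?case by (rule Q.span_base)
    next
      case base
      show ?case unfolding Q_subspace_iff
        by (auto simp: Q.span_zero distrib_right intro: Q.span_add)
           (metis Q.span_scale mult.assoc qscale_def)
    qed
    thus "y \<in> Q.span (mulset E' B)" using y by simp
  qed
  have spanB: "Q.span (mulset E B) \<subseteq> Q.span (mulset E' B)"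
    using mulB by (intro Q.span_minimal) auto
  define f :: "complex \<times> complex \<Rightarrow> complex" where "f = (\<lambda>(e, s). e * s)"
  define P where "P = f ` (E' \<times> S)"
  have finP: "finite P" unfolding P_def using finE' finS by simp
  have inj: "inj_on f (E' \<times> S)"
  proof (rule inj_onI, clarify)
    fix e s e' s' assume h: "e \<in> E'" "s \<in> S" "e' \<in> E'" "s' \<in> S" "f (e, s) = f (e', s')"
    hence eq: "e * s = e' * s'" by (simp add: f_def)
    show "e = e' \<and> s = s'"
    proof (cases "s = s'")
      case True
      thus ?thesis using eq z0S h(2) by auto
    next
      case False
      define c :: "complex \<Rightarrow> complex" where "c x = (if x = s then e else if x = s' then - e' else 0)" for x
      have "(\<Sum>x\<in>S. c x * x) = (\<Sum>x\<in>S. (if x = s then e * s else 0) + (if x = s' then - (e' * s') else 0))"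
        by (intro sum.cong) (auto simp: c_def False)
      also have "\<dots> = e * s - e' * s'" using h(2,4) finS by (simp add: sum.distrib)
      finally have "(\<Sum>x\<in>S. c x * x) = 0" using eq by simp
      moreover have "\<forall>x\<in>S. algebraic (c x)" using E'alg h(1,3) by (auto simp: c_def)
      ultimately have "c s = 0" using indS h(2) by blast
      hence "e = 0" by (simp add: c_def)
      thus ?thesis using z0E' h(1) by simp
    qed
  qed
  have cardP: "card P = card E' * card S"
    unfolding P_def using card_image[OF inj] by (simp add: card_cartesian_product)
  have PB: "P \<subseteq> Q.span (mulset E' B)"
  proof
    fix p assume "p \<in> P"
    then obtain e s where p: "p = e * s" "e \<in> E'" "s \<in> S" by (auto simp: P_def f_def)
    have "e \<in> Q.span E" using p(2) E'(1) Q.span_base by blast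
    moreover have "s \<in> Q.span (mulset E B)" using p(3) sub by blast
    ultimately have "e * s \<in> Q.span (mulset E B)" using span_mult_E[OF mulE] by blast
    thus "p \<in> Q.span (mulset E' B)" using spanB p(1) by blast
  qed
  have indP: "Q.independent P"
  proof -
    have "\<forall>v\<in>P. u v = 0" if u: "(\<Sum>v\<in>P. qscale (u v) v) = 0" for u
    proof -
      define c where "c s = (\<Sum>e\<in>E'. of_rat (u (e * s)) * e)" for s
      have "(\<Sum>v\<in>P. qscale (u v) v) = (\<Sum>x\<in>E' \<times> S. qscale (u (f x)) (f x))"
        unfolding P_def by (rule sum.reindex_cong[OF inj refl refl])
      also have "\<dots> = (\<Sum>e\<in>E'. \<Sum>s\<in>S. of_rat (u (e * s)) * (e * s))"
        by (simp add: sum.cartesian_product f_def qscale_def case_prod_unfold)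
      also have "\<dots> = (\<Sum>s\<in>S. \<Sum>e\<in>E'. of_rat (u (e * s)) * (e * s))" by (rule sum.swap)
      also have "\<dots> = (\<Sum>s\<in>S. c s * s)"
        by (simp add: c_def sum_distrib_right mult.assoc)
      finally have "(\<Sum>s\<in>S. c s * s) = 0" using u by simp
      moreover have "c s \<in> Q.span E" for s
        unfolding c_def by (intro Q.span_sum) (metis E'(1) Q.span_base Q.span_scale qscale_def subsetD)
      ultimately have c0: "\<forall>s\<in>S. c s = 0" using indS alg by blast
      show ?thesis
      proof
        fix v assume "v \<in> P"
        then obtain e s where v: "v = e * s" "e \<in> E'" "s \<in> S" by (auto simp: P_def f_def)
        have "(\<Sum>e\<in>E'. qscale (u (e * s)) e) = 0" using c0 v(3) by (simp add: c_def qscale_def)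
        moreover have "\<forall>T\<subseteq>E'. finite T \<longrightarrow> (\<forall>u. (\<Sum>v\<in>T. qscale (u v) v) = 0 \<longrightarrow> (\<forall>v\<in>T. u v = 0))"
          using E'(2) by (simp only: Q.independent_explicit_finite_subsets)
        ultimately have "\<forall>e\<in>E'. u (e * s) = 0"
          using finE' by (metis order_refl)
        thus "u v = 0" using v by simp
      qed
    qed
    note uz = this
    show ?thesis
    proof
      assume "Q.dependent P"
      then obtain u where "\<exists>v\<in>P. u v \<noteq> 0" "(\<Sum>v\<in>P. qscale (u v) v) = 0"
        using Q.dependent_finite[OF finP] by blast
      thus False using uz by blast
    qed
  qed
  have finM: "finite (mulset E' B)"
  proof -
    have "mulset E' B = f ` (E' \<times> B)" by (auto simp: mulset_def f_def)
    thus ?thesis using finE' finB by simp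
  qed
  have cM: "card (mulset E' B) \<le> card E' * card B"
  proof -
    have "mulset E' B = f ` (E' \<times> B)" by (auto simp: mulset_def f_def)
    moreover have "card (f ` (E' \<times> B)) \<le> card (E' \<times> B)" using finE' finB by (intro card_image_le) simp
    ultimately have "card (mulset E' B) \<le> card (E' \<times> B)" by simp
    thus ?thesis by (simp add: card_cartesian_product)
  qed
  have "card P \<le> card (mulset E' B)" using Q.independent_span_bound[OF finM indP PB] by blast
  hence "card E' * card S \<le> card E' * card B" using cardP cM by linarith
  moreover have "card E' > 0" using E'ne finE' by (simp add: card_gt_0_iff)
  ultimately show ?thesis by simp
qed

lemma geom_weighted:
  fixes w :: complex
  shows "(w - 1) * (\<Sum>k<m. of_nat k * w ^ k) = of_nat m * w ^ m - w * (\<Sum>k<m. w ^ k)"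
  by (induction m) (simp_all add: algebra_simps)

lemma geom_weighted_root:
  fixes w :: complex
  assumes "w ^ m = 1" "w \<noteq> 1"
  shows "(w - 1) * (\<Sum>k<m. of_nat k * w ^ k) = of_nat m"
proof -
  have "(w - 1) * (\<Sum>k<m. w ^ k) = 0" using power_diff_1_eq[of w m] assms(1) by simp
  hence "(\<Sum>k<m. w ^ k) = 0" using assms(2) by simp
  thus ?thesis using geom_weighted[of w m] assms(1) by simp
qed

locale hsetup =
  fixes n m q :: nat
  assumes n2: "n \<ge> 2" and qdef: "q = 2 ^ n" and mdef: "m = 2 ^ (n - 2)"
begin

lemma q4m: "q = 4 * m"
proof -
  obtain k where k: "n = k + 2" using n2 by (metis add.commute le_Suc_ex)
  show ?thesis unfolding qdef mdef k by (simp add: power_add)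
qed

lemma m_pos: "m > 0" unfolding mdef by simp

definition zeta :: complex where "zeta = exp (2 * of_real pi * \<i> / of_nat q)"
definition E :: "complex set" where "E = (\<lambda>k. zeta ^ k) ` {..<q}"

lemma zeta_q: "zeta ^ q = 1"
proof -
  have "zeta ^ q = exp (of_nat q * (2 * of_real pi * \<i> / of_nat q))"
    unfolding zeta_def by (rule exp_of_nat_mult[symmetric])
  also have "of_nat q * (2 * of_real pi * \<i> / of_nat q) = 2 * of_real pi * \<i>"
    using m_pos q4m by simp
  finally show ?thesis by simp
qed

lemma zeta_pow_E: "zeta ^ j \<in> E"
proof -
  have "zeta ^ j = (zeta ^ q) ^ (j div q) * zeta ^ (j mod q)"
    by (subst power_mult[symmetric], subst power_add[symmetric]) simp
  hence "zeta ^ j = zeta ^ (j mod q)" by (simp add: zeta_q)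
  thus ?thesis unfolding E_def using m_pos q4m by auto
qed

lemma E_mult: "a \<in> E \<Longrightarrow> b \<in> E \<Longrightarrow> a * b \<in> E"
  unfolding E_def by (auto simp: power_add[symmetric] zeta_pow_E[unfolded E_def])

lemma E_one: "1 \<in> E" using zeta_pow_E[of 0] by simp

lemma E_fin: "finite E" unfolding E_def by simp

lemma ii_E: "\<i> \<in> E"
proof -
  have "zeta ^ m = exp (of_nat m * (2 * of_real pi * \<i> / of_nat q))"
    unfolding zeta_def by (rule exp_of_nat_mult[symmetric])
  also have "of_nat m * (2 * of_real pi * \<i> / of_nat q) = \<i> * of_real (pi / 2)"
    using m_pos q4m by (simp add: field_simps)
  also have "exp (\<i> * of_real (pi / 2)) = \<i>"
  proof -
    have "cis (pi/2) = exp (\<i> * of_real (pi/2))" by (rule cis_conv_exp)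
    moreover have "cis (pi/2) = \<i>" by (simp add: complex_eq_iff)
    ultimately show ?thesis by simp
  qed
  finally show ?thesis using zeta_pow_E[of m] by simp
qed

abbreviation K where "K \<equiv> Q.span E"

lemma K_mult: "a \<in> K \<Longrightarrow> b \<in> K \<Longrightarrow> a * b \<in> K"
  using span_mult_closed[OF E_mult] by blast

lemma K_zeta: "zeta ^ j \<in> K" using zeta_pow_E Q.span_base by blast

lemma K_rat: "of_rat r * a \<in> K" if "a \<in> K" using Q.span_scale[OF that, of r] by (simp add: qscale_def)

lemma cot_K:
  assumes "0 < d" "d < q"
  shows "cot (of_real pi * (of_nat d / of_nat q)) \<in> K"
proof -
  define x :: complex where "x = of_real pi * (of_nat d / of_nat q)"
  define w where "w = exp (2 * \<i> * x)"
  have w: "w = zeta ^ d"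
  proof -
    have "zeta ^ d = exp (of_nat d * (2 * of_real pi * \<i> / of_nat q))"
      unfolding zeta_def by (rule exp_of_nat_mult[symmetric])
    thus ?thesis unfolding w_def x_def by (simp add: field_simps)
  qed
  have xr: "x = of_real (pi * d / q)" unfolding x_def by simp
  have "sin (pi * d / q) > 0"
    using assms by (intro sin_gt_zero) (auto simp: field_simps)
  moreover have "sin x = of_real (sin (pi * d / q))" unfolding xr by (rule sin_of_real)
  ultimately have sx: "sin x \<noteq> 0" by simp
  have ex2: "exp (\<i> * x) * exp (\<i> * x) = w" unfolding w_def by (simp add: exp_add[symmetric] mult.assoc)
  have ex3: "exp (\<i> * x) * exp (- (\<i> * x)) = 1" by (simp add: exp_minus)
  have s2: "2 * \<i> * exp (\<i> * x) * sin x = w - 1"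
    unfolding sin_exp_eq using ex2 ex3 by (simp add: field_simps)
  have c2: "2 * exp (\<i> * x) * cos x = w + 1"
    unfolding cos_exp_eq using ex2 ex3 by (simp add: field_simps)
  have w1: "w \<noteq> 1" using s2 sx by auto
  have wq: "w ^ q = 1" unfolding w by (simp add: power_mult[symmetric] mult.commute[of d] power_mult zeta_q)
  define T where "T = (\<Sum>k<q. of_nat k * w ^ k)"
  have T: "(w - 1) * T = of_nat q" unfolding T_def using geom_weighted_root[OF wq w1] .
  have w1': "w - 1 \<noteq> 0" using w1 by simp
  have qnz: "(of_nat q :: complex) \<noteq> 0" using m_pos q4m by simp
  have eq: "cos x * (w - 1) = \<i> * (w + 1) * sin x"
  proof -
    have "cos x * (w - 1) = cos x * (2 * \<i> * exp (\<i> * x) * sin x)" using s2 by simp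
    also have "\<dots> = \<i> * (2 * exp (\<i> * x) * cos x) * sin x" by (simp add: algebra_simps)
    also have "\<dots> = \<i> * (w + 1) * sin x" using c2 by simp
    finally show ?thesis .
  qed
  have "1 / (w - 1) = T / of_nat q"
    by (subst frac_eq_eq[OF w1' qnz]) (simp add: T[symmetric] mult.commute)
  hence i1: "\<i> * (w + 1) / (w - 1) = \<i> * (w + 1) * (T / of_nat q)"
    by (metis times_divide_eq_right mult_1_right)
  have "cot x = \<i> * (w + 1) / (w - 1)"
    unfolding cot_def by (subst frac_eq_eq[OF sx w1']) (rule eq)
  also have "\<dots> = \<i> * (w + 1) * (T / of_nat q)" by (rule i1)
  also have "\<dots> = of_rat (1 / of_nat q) * (\<i> * ((w + 1) * T))"
    by (simp add: of_rat_divide mult.assoc)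
  finally have cx: "cot x = of_rat (1 / of_nat q) * (\<i> * ((w + 1) * T))" .
  have "w + 1 \<in> K" unfolding w using K_zeta[of d] K_zeta[of 0] by (simp add: Q.span_add)
  moreover have "T \<in> K" unfolding T_def w
  proof (intro Q.span_sum)
    fix k show "of_nat k * (zeta ^ d) ^ k \<in> K"
      using K_rat[of "zeta ^ (d * k)" "of_nat k"] K_zeta[of "d * k"] by (simp add: power_mult)
  qed
  ultimately have "\<i> * ((w + 1) * T) \<in> K" using K_mult ii_E Q.span_base by blast
  thus ?thesis using cx K_rat unfolding x_def by simp
qed

end

definition w :: "complex \<Rightarrow> complex" where "w r = Digamma r + euler_mascheroni"
definition WW :: "nat \<Rightarrow> nat \<Rightarrow> complex" where "WW N b = w (of_nat b / of_nat N)"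

lemma w_one: "w 1 = 0" by (simp add: w_def)

lemma WW_dup:
  assumes "N > 0" "c > 0"
  shows "WW (2*N) c + WW (2*N) (c + N) = 2 * WW N c - 2 * of_real (ln 2)"
proof -
  define z :: complex where "z = of_nat c / of_nat (2*N)"
  have "Re z > 0" using assms by (simp add: z_def)
  from Digamma_duplication[OF this]
  have D: "Digamma z + Digamma (z + 1/2) = 2 * Digamma (2 * z) - 2 * of_real (ln 2)" .
  have z1: "z + 1/2 = of_nat (c + N) / of_nat (2*N)" using assms by (simp add: z_def field_simps)
  have z2: "2 * z = of_nat c / of_nat N" using assms by (simp add: z_def field_simps)
  show ?thesis using D unfolding WW_def w_def z1[symmetric] z2[symmetric] z_def[symmetric]
    by (simp add: algebra_simps)
qed

lemma A_rec:
  assumes "N > 0"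
  shows "(\<Sum>b\<in>{1..2*N}. WW (2*N) b) = 2 * (\<Sum>c\<in>{1..N}. WW N c) - 2 * of_nat N * of_real (ln 2)"
proof -
  have split: "{1..2*N} = {1..N} \<union> {1+N..N+N}" by auto
  have "(\<Sum>b\<in>{1..2*N}. WW (2*N) b) = (\<Sum>b\<in>{1..N}. WW (2*N) b) + (\<Sum>b\<in>{1+N..N+N}. WW (2*N) b)"
    unfolding split by (rule sum.union_disjoint) auto
  also have "(\<Sum>b\<in>{1+N..N+N}. WW (2*N) b) = (\<Sum>c\<in>{1..N}. WW (2*N) (c + N))"
    by (rule sum.shift_bounds_cl_nat_ivl)
  also have "(\<Sum>b\<in>{1..N}. WW (2*N) b) + (\<Sum>c\<in>{1..N}. WW (2*N) (c + N))
      = (\<Sum>c\<in>{1..N}. 2 * WW N c - 2 * of_real (ln 2))"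
    unfolding sum.distrib[symmetric] using assms by (intro sum.cong refl WW_dup) auto
  also have "\<dots> = 2 * (\<Sum>c\<in>{1..N}. WW N c) - 2 * of_nat N * of_real (ln 2)"
    by (simp add: sum_subtractf sum_distrib_left)
  finally show ?thesis .
qed

lemma A_pow: "(\<Sum>b\<in>{1..2^k}. WW (2^k) b) = - (of_nat (k * 2^k)) * of_real (ln 2)"
proof (induction k)
  case 0
  show ?case by (simp add: WW_def w_one)
next
  case (Suc k)
  have "(\<Sum>b\<in>{1..2^Suc k}. WW (2^Suc k) b) = (\<Sum>b\<in>{1..2*2^k}. WW (2*2^k) b)" by simp
  also have "\<dots> = 2 * (\<Sum>c\<in>{1..2^k}. WW (2^k) c) - 2 * of_nat (2^k) * of_real (ln 2)"
    by (rule A_rec) simp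
  also have "\<dots> = - (of_nat (Suc k * 2^Suc k)) * of_real (ln 2)"
    unfolding Suc.IH by (simp add: algebra_simps)
  finally show ?case .
qed

context hsetup
begin

abbreviation W where "W b \<equiv> WW q b"
definition Odds :: "nat set" where "Odds = {d. odd d \<and> d < 2*m}"
definition Bset :: "complex set" where "Bset = {1, of_real pi} \<union> W ` Odds"
abbreviation V where "V \<equiv> Q.span (mulset E Bset)"

lemma V_add: "x \<in> V \<Longrightarrow> y \<in> V \<Longrightarrow> x + y \<in> V" by (rule Q.span_add)
lemma V_diff: "x \<in> V \<Longrightarrow> y \<in> V \<Longrightarrow> x - y \<in> V" by (rule Q.span_diff)
lemma V_rat: "x \<in> V \<Longrightarrow> of_rat r * x \<in> V" using Q.span_scale[of x _ r] by (simp add: qscale_def)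
lemma V_K: "a \<in> K \<Longrightarrow> x \<in> V \<Longrightarrow> a * x \<in> V" by (rule span_mult_E[OF E_mult])
lemma V_sum: "(\<And>i. i \<in> A \<Longrightarrow> f i \<in> V) \<Longrightarrow> sum f A \<in> V" by (rule Q.span_sum)
lemma V_base: "b \<in> Bset \<Longrightarrow> b \<in> V"
proof -
  assume "b \<in> Bset"
  hence "1 * b \<in> mulset E Bset" using E_one unfolding mulset_def by blast
  thus "b \<in> V" by (simp add: Q.span_base)
qed
lemma V_one: "1 \<in> V" by (rule V_base) (simp add: Bset_def)
lemma V_pi: "of_real pi \<in> V" by (rule V_base) (simp add: Bset_def)
lemma V_odd: "d \<in> Odds \<Longrightarrow> W d \<in> V" by (rule V_base) (simp add: Bset_def)
lemma V_nat: "x \<in> V \<Longrightarrow> of_nat k * x \<in> V" using V_rat[of x "of_nat k"] by simp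

lemma V_pi_cot: "0 < d \<Longrightarrow> d < q \<Longrightarrow> of_real pi * cot (of_real pi * (of_nat d / of_nat q)) \<in> V"
  using V_K[OF cot_K V_pi] by (simp add: mult.commute)

lemma W_refl:
  assumes "0 < d" "d < q"
  shows "W (q - d) = W d + of_real pi * cot (of_real pi * (of_nat d / of_nat q))"
proof -
  define z :: complex where "z = of_nat d / of_nat q"
  have "z = of_int (int d) / of_int (int q)" by (simp add: z_def)
  moreover have "\<not> int q dvd int d" using assms by (auto dest: zdvd_imp_le)
  moreover have "int q \<noteq> 0" using assms by simp
  ultimately have "z \<notin> \<int>" using fraction_not_in_Ints[of "int q" "int d"] by simp
  from Digamma_reflection[OF this]
  have R: "Digamma (1 - z) - Digamma z = of_real pi * cot (of_real pi * z)" .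
  have e: "of_nat (q - d) / of_nat q = 1 - z" using assms by (simp add: z_def field_simps of_nat_diff)
  have "W (q - d) = Digamma (1 - z) + euler_mascheroni" unfolding WW_def w_def e ..
  also have "\<dots> = W d + of_real pi * cot (of_real pi * z)" using R unfolding WW_def w_def z_def
    by (simp add: algebra_simps)
  finally show ?thesis unfolding z_def .
qed

end

lemma pow2_decomp: "b > 0 \<Longrightarrow> \<exists>j d. odd d \<and> b = 2 ^ j * (d::nat)"
proof (induction b rule: less_induct)
  case (less b)
  show ?case
  proof (cases "odd b")
    case True thus ?thesis by (intro exI[of _ 0] exI[of _ b]) simp
  next
    case False
    then obtain b' where b': "b = 2 * b'" by (auto elim: evenE)
    with less.prems have "b' > 0" "b' < b" by auto
    from less.IH[OF this(2,1)] obtain j d where "odd d" "b' = 2 ^ j * d" by blast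
    thus ?thesis using b' by (intro exI[of _ "Suc j"] exI[of _ d]) simp
  qed
qed

context hsetup
begin

lemma W_q: "W q = 0" using m_pos q4m by (simp add: WW_def w_one)

lemma W_double: "c > 0 \<Longrightarrow> W (2 * c) = WW (2*m) c"
  using m_pos q4m by (simp add: WW_def)

lemma Odds_card: "card Odds = m"
proof -
  have eqO: "Odds = (\<lambda>k. 2*k+1) ` {..<m}"
  proof (rule Set.set_eqI, rule iffI)
    fix d assume "d \<in> Odds"
    hence d: "odd d" "d < 2*m" by (auto simp: Odds_def)
    hence "d = 2 * (d div 2) + 1" "d div 2 < m" by (auto simp: odd_two_times_div_two_succ)
    thus "d \<in> (\<lambda>k. 2*k+1) ` {..<m}" by (intro image_eqI[of _ _ "d div 2"]) auto
  next
    fix d assume "d \<in> (\<lambda>k. 2*k+1) ` {..<m}"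
    then obtain k where "d = 2*k+1" "k < m" by blast
    thus "d \<in> Odds" by (simp add: Odds_def)
  qed
  have inj: "inj_on (\<lambda>k. 2*k+1::nat) {..<m}" by (auto simp: inj_on_def)
  have "card Odds = card {..<m}" unfolding eqO by (rule card_image[OF inj])
  thus ?thesis by simp
qed

lemma Odds_fin: "finite Odds" unfolding Odds_def by simp

lemma L_in_V: "of_real (ln 2) \<in> V"
proof -
  define Lc :: complex where "Lc = of_real (ln 2)"
  define ct :: "nat \<Rightarrow> complex" where "ct d = of_real pi * cot (of_real pi * (of_nat d / of_nat q))" for d
  obtain k where k: "n = k + 2" using n2 by (metis add.commute le_Suc_ex)
  have n1: "2 ^ (n - 1) = 2 * m" unfolding mdef k by simp
  have S1: "(\<Sum>b\<in>{1..q}. W b) = - of_nat (n * q) * Lc"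
    using A_pow[of n] unfolding qdef Lc_def by simp
  have S2: "(\<Sum>c\<in>{1..2*m}. WW (2*m) c) = - of_nat ((n - 1) * (2*m)) * Lc"
    using A_pow[of "n - 1"] unfolding n1 Lc_def by simp
  define Od where "Od = {b\<in>{1..q}. odd b}"
  define Ev where "Ev = {b\<in>{1..q}. even b}"
  have "(\<Sum>b\<in>{1..q}. W b) = (\<Sum>b\<in>Od. W b) + (\<Sum>b\<in>Ev. W b)"
  proof -
    have "{1..q} = Od \<union> Ev" by (auto simp: Od_def Ev_def)
    hence "(\<Sum>b\<in>{1..q}. W b) = (\<Sum>b\<in>Od \<union> Ev. W b)" by simp
    also have "\<dots> = (\<Sum>b\<in>Od. W b) + (\<Sum>b\<in>Ev. W b)"
      by (rule sum.union_disjoint) (auto simp: Od_def Ev_def)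
    finally show ?thesis .
  qed
  moreover have "(\<Sum>b\<in>Ev. W b) = (\<Sum>c\<in>{1..2*m}. WW (2*m) c)"
  proof -
    have "Ev = (\<lambda>c. 2*c) ` {1..2*m}"
    proof (intro Set.set_eqI iffI)
      fix b assume "b \<in> Ev"
      hence "b = 2 * (b div 2)" "b div 2 \<in> {1..2*m}" using q4m by (auto simp: Ev_def)
      thus "b \<in> (\<lambda>c. 2*c) ` {1..2*m}" by blast
    qed (use q4m in \<open>auto simp: Ev_def\<close>)
    hence "(\<Sum>b\<in>Ev. W b) = (\<Sum>c\<in>{1..2*m}. W (2*c))"
      by (simp add: sum.reindex inj_on_def)
    also have "\<dots> = (\<Sum>c\<in>{1..2*m}. WW (2*m) c)" by (intro sum.cong refl W_double) auto
    finally show ?thesis .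
  qed
  moreover have "(\<Sum>b\<in>Od. W b) = (\<Sum>d\<in>Odds. 2 * W d + ct d)"
  proof -
    have "Od = Odds \<union> (\<lambda>d. q - d) ` Odds"
    proof (intro Set.set_eqI iffI)
      fix b assume "b \<in> Od"
      hence b: "odd b" "1 \<le> b" "b \<le> q" by (auto simp: Od_def)
      show "b \<in> Odds \<union> (\<lambda>d. q - d) ` Odds"
      proof (cases "b < 2*m")
        case True thus ?thesis using b by (auto simp: Odds_def)
      next
        case False
        from b(1) obtain k where k: "b = 2*k+1" by (rule oddE)
        have "b \<noteq> 2*m" using k by presburger
        hence "q - b = 2 * (2*m - k - 1) + 1" "q - b < 2*m" "b = q - (q - b)" using b k q4m False by auto
        hence "q - b \<in> Odds" "b = q - (q - b)" unfolding Odds_def by auto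
        thus ?thesis by blast
      qed
    next
      fix b assume "b \<in> Odds \<union> (\<lambda>d. q - d) ` Odds"
      thus "b \<in> Od"
      proof
        assume "b \<in> Odds"
        thus "b \<in> Od" using q4m by (auto simp: Odds_def Od_def dest: odd_pos)
      next
        assume "b \<in> (\<lambda>d. q - d) ` Odds"
        then obtain d where d: "b = q - d" "odd d" "d < 2*m" by (auto simp: Odds_def)
        from d(2) obtain k where k: "d = 2*k+1" by (rule oddE)
        have "b = 2 * (2*m - k - 1) + 1" using d k q4m by simp
        moreover have "b \<le> q" "1 \<le> b" using d k q4m by auto
        ultimately show "b \<in> Od" unfolding Od_def by auto
      qed
    qed
    moreover have "Odds \<inter> (\<lambda>d. q - d) ` Odds = {}" using q4m by (auto simp: Odds_def)
    ultimately have "(\<Sum>b\<in>Od. W b) = (\<Sum>d\<in>Odds. W d) + (\<Sum>b\<in>(\<lambda>d. q - d) ` Odds. W b)"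
      using Odds_fin by (simp add: sum.union_disjoint)
    also have "(\<Sum>b\<in>(\<lambda>d. q - d) ` Odds. W b) = (\<Sum>d\<in>Odds. W (q - d))"
      using q4m by (subst sum.reindex) (auto simp: inj_on_def Odds_def)
    also have "\<dots> = (\<Sum>d\<in>Odds. W d + ct d)"
    proof (intro sum.cong refl)
      fix d assume "d \<in> Odds"
      hence "0 < d" "d < q" using q4m by (auto simp: Odds_def dest: odd_pos)
      thus "W (q - d) = W d + ct d" unfolding ct_def by (rule W_refl)
    qed
    finally show ?thesis by (simp add: sum.distrib sum_distrib_left)
  qed
  ultimately have eq: "(\<Sum>d\<in>Odds. 2 * W d + ct d) = - of_nat (n * q) * Lc + of_nat ((n - 1) * (2*m)) * Lc"
    using S1 S2 by (simp add: algebra_simps)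
  have nq: "n * q = (n - 1) * (2*m) + (n + 1) * (2*m)" unfolding k q4m by (simp add: algebra_simps)
  have eq2: "(\<Sum>d\<in>Odds. 2 * W d + ct d) = - of_nat ((n + 1) * (2*m)) * Lc"
    unfolding eq nq by (simp add: algebra_simps)
  have pos0: "(n + 1) * (2*m) \<noteq> 0" using m_pos by simp
  have pos: "(of_nat ((n + 1) * (2*m)) :: complex) \<noteq> 0" unfolding of_nat_eq_0_iff by (rule pos0)
  define NN where "NN = (n + 1) * (2*m)"
  have posN: "(of_nat NN :: complex) \<noteq> 0" using pos unfolding NN_def .
  have r: "(of_rat (- 1 / of_nat NN) :: complex) = - 1 / of_nat NN"
    by (simp add: of_rat_divide of_rat_minus)
  have "Lc = of_rat (- 1 / of_nat NN) * (- of_nat NN * Lc)"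
    unfolding r using posN by (simp add: field_simps)
  hence LcE: "Lc = of_rat (- 1 / of_nat NN) * (\<Sum>d\<in>Odds. 2 * W d + ct d)"
    unfolding eq2 NN_def .
  moreover have "(\<Sum>d\<in>Odds. 2 * W d + ct d) \<in> V"
  proof (intro V_sum V_add)
    fix d assume d: "d \<in> Odds"
    show "2 * W d \<in> V" using V_nat[OF V_odd[OF d], of 2] by simp
    have "0 < d" "d < q" using d q4m by (auto simp: Odds_def dest: odd_pos)
    thus "ct d \<in> V" unfolding ct_def by (rule V_pi_cot)
  qed
  hence "of_rat (- 1 / of_nat NN) * (\<Sum>d\<in>Odds. 2 * W d + ct d) \<in> V" by (rule V_rat)
  hence "Lc \<in> V" by (subst LcE)
  thus ?thesis unfolding Lc_def .
qed


lemma W_pow_in_V: "odd d \<Longrightarrow> 2 ^ j * d \<le> q \<Longrightarrow> W (2 ^ j * d) \<in> V"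
proof (induction j arbitrary: d)
  case 0
  hence d: "odd d" "d \<le> q" by auto
  from d(1) obtain k where k: "d = 2*k+1" by (rule oddE)
  show ?case
  proof (cases "d < 2*m")
    case True
    hence "d \<in> Odds" using d by (simp add: Odds_def)
    thus ?thesis using V_odd by simp
  next
    case False
    have "d \<noteq> 2*m" "d \<noteq> q" using k q4m by presburger+
    hence dd: "q - d = 2 * (2*m - k - 1) + 1" "q - d < 2*m" "d = q - (q - d)" "0 < q - d" "q - d < q"
      using d k q4m False by auto
    hence "q - d \<in> Odds" unfolding Odds_def by auto
    hence "W (q - d) \<in> V" by (rule V_odd)
    moreover have "W d = W (q - d) + of_real pi * cot (of_real pi * (of_nat (q - d) / of_nat q))"
      using W_refl[OF dd(4,5)] dd(3) by simp
    ultimately show ?thesis using V_pi_cot[OF dd(4,5)] V_add by simp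
  qed
next
  case (Suc j)
  show ?case
  proof (cases "2 ^ Suc j * d = q")
    case True
    thus ?thesis using W_q Q.span_zero by simp
  next
    case False
    define c where "c = 2 ^ j * d"
    have dpos: "d > 0" using Suc.prems(1) by (rule odd_pos)
    have bq: "2 * c < q" using Suc.prems(2) False by (simp add: c_def)
    have cpos: "c > 0" using dpos by (simp add: c_def)
    have "(2::nat) ^ Suc j \<le> 2 ^ Suc j * d" using dpos by simp
    moreover have "2 ^ Suc j * d < (2::nat) ^ n" using bq qdef by (simp add: c_def)
    ultimately have "2 ^ Suc j < (2::nat) ^ n" by linarith
    hence jn: "Suc j < n" using power_less_imp_less_exp[of "2::nat" "Suc j" n] by simp
    define e where "e = (2::nat) ^ (n - 1 - j)"
    have ee: "even e" unfolding e_def using jn by simp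
    have twom: "2 * m = 2 ^ j * e"
    proof -
      obtain k where k: "n = k + 2" using n2 by (metis add.commute le_Suc_ex)
      have "2 * m = 2 ^ (n - 1)" unfolding mdef k by simp
      also have "n - 1 = j + (n - 1 - j)" using jn by simp
      finally show ?thesis unfolding e_def by (simp add: power_add)
    qed
    have c2m: "c + 2 * m = 2 ^ j * (d + e)" unfolding c_def twom by (simp add: algebra_simps)
    have ode: "odd (d + e)" using Suc.prems(1) ee by simp
    have W1: "W c \<in> V" using Suc.IH[OF Suc.prems(1)] bq unfolding c_def by simp
    have W2: "W (c + 2 * m) \<in> V" unfolding c2m using Suc.IH[OF ode] bq q4m c2m by simp
    have dup: "W c + W (c + 2 * m) = 2 * WW (2*m) c - 2 * of_real (ln 2)"
      using WW_dup[of "2*m" c] m_pos cpos q4m by (simp add: mult.assoc)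
    have "W (2 ^ Suc j * d) = WW (2*m) c" using W_double[OF cpos] by (simp add: c_def mult.assoc)
    also have "\<dots> = of_rat (1/2) * (W c + W (c + 2 * m) + 2 * of_real (ln 2))"
      using dup by (simp add: field_simps of_rat_divide)
    finally show ?thesis
      using V_rat[OF V_add[OF V_add[OF W1 W2] V_nat[OF L_in_V, of 2]]] by simp
  qed
qed

lemma W_in_V: "1 \<le> b \<Longrightarrow> b \<le> q \<Longrightarrow> W b \<in> V"
  using pow2_decomp[of b] W_pow_in_V by auto

lemma harm_in_V:
  assumes "1 \<le> b" "b \<le> q"
  shows "harmH (of_nat b / of_nat q) \<in> V"
proof -
  define r :: complex where "r = of_nat b / of_nat q"
  have r0: "r \<noteq> 0" using assms m_pos q4m by (simp add: r_def)
  have "Re r \<ge> 0" by (simp add: r_def)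
  hence "harmH r = Digamma (r + 1) + euler_mascheroni" by (rule harmH_Digamma)
  also have "\<dots> = W b + of_rat (of_nat q / of_nat b) * 1"
    using Digamma_plus1[OF r0] r0 by (simp add: WW_def w_def r_def of_rat_divide)
  finally have "harmH r = W b + of_rat (of_nat q / of_nat b) * 1" .
  moreover have "W b + of_rat (of_nat q / of_nat b) * 1 \<in> V"
    using V_add[OF W_in_V[OF assms] V_rat[OF V_one]] .
  ultimately show ?thesis unfolding r_def by simp
qed

lemma Bset_fin: "finite Bset" unfolding Bset_def using Odds_fin by simp

lemma Bset_card: "card Bset \<le> m + 2"
proof -
  have "card Bset \<le> card {1, complex_of_real pi} + card (W ` Odds)"
    unfolding Bset_def by (rule card_Un_le)
  also have "card {1, complex_of_real pi} \<le> 2" by (simp add: card_insert_if)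
  also have "card (W ` Odds) \<le> card Odds" using Odds_fin by (rule card_image_le)
  finally show ?thesis using Odds_card by simp
qed

lemma main_loc:
  assumes "S \<subseteq> {harmH (of_nat a / of_nat q) | a. a \<in> {1..q}}" "alg_independent S"
  shows "card S \<le> m + 2"
proof -
  have "S \<subseteq> V" using assms(1) harm_in_V by auto
  from count_lemma[OF E_fin E_one E_mult Bset_fin assms(2) this]
  show ?thesis using Bset_card by simp
qed

end

theorem theorem3p5:
  fixes n q :: nat
  assumes "n \<ge> 2" and "q = 2 ^ n"
  shows "\<forall>S. S \<subseteq> {harmH (of_nat a / of_nat q) | a. a \<in> {1..q}} \<and> alg_independent S
           \<longrightarrow> card S \<le> totient (totient q) + 2"
proof (intro allI impI, elim conjE)
  fix S assume S: "S \<subseteq> {harmH (of_nat a / of_nat q) | a. a \<in> {1..q}}" "alg_independent S"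
  interpret hsetup n "2 ^ (n - 2)" q using assms by unfold_locales auto
  have "totient q = 2 ^ (n - 1)" using assms totient_prime_power[of 2 n] by simp
  moreover have "totient (2 ^ (n - 1)) = (2::nat) ^ (n - 2)"
    using assms totient_prime_power[of 2 "n - 1"] by (simp add: diff_diff_add)
  ultimately have "totient (totient q) = 2 ^ (n - 2)" by simp
  thus "card S \<le> totient (totient q) + 2" using main_loc[OF S] by simp
qed

end
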